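(* Let $F=\{f_1,\dots,f_m\}$ be an IFS of contracting similitudes of $\mathbb{R}^d$ with attractor $A$. (a) If $h\in\mathcal{N}$, then $f_k^{-1}\circ h\circ f_j\in\mathcal{N}$ for all $j,k\in\{1,\dots,m\}$. (b) With $K=\bigcup_{h\in\mathcal{N}}h(A)$, one has $K\subseteq f_k(K)$ for each $k$. (c) $f_k(U_1)\subseteq U_1$ for each $k=1,\dots,m$.
   Context: $F^0=\{\mathrm{id}\}$, $F^k$ is the set of maps $f_{i_1}\circ\cdots\circ f_{i_k}$, $F^*=\bigcup_{k\ge0}F^k$; a piece of $A$ is $f'(A)$ with $f'\in F^*$. $\mathcal{N}$ is the set of all maps $h=f^{-1}g$ with $f,g\in F^*$ (of arbitrary lengths) such that $h(A)$ contains no piece of $A$. $d(x,E)=\inf\{|x-y|:y\in E\}$, and $U_1=\{x\in\mathbb{R}^d: d(x,A)<\inf_{h\in\mathcal{N}} d(x,h(A))\}$ (infimum over the empty set is $+\infty$). *)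

theory Defs
  imports "HOL-Analysis.Analysis"
begin

definition contracting_similitude :: "('a::euclidean_space \<Rightarrow> 'a) \<Rightarrow> bool" where
  "contracting_similitude f \<longleftrightarrow>
     (\<exists>r. 0 < r \<and> r < 1 \<and> (\<forall>x y. dist (f x) (f y) = r * dist x y))"

definition similitude_IFS :: "nat \<Rightarrow> (nat \<Rightarrow> 'a::euclidean_space \<Rightarrow> 'a) \<Rightarrow> bool" where
  "similitude_IFS m f \<longleftrightarrow> m \<ge> 1 \<and> (\<forall>i\<in>{1..m}. contracting_similitude (f i))"

definition is_attractor :: "nat \<Rightarrow> (nat \<Rightarrow> 'a::euclidean_space \<Rightarrow> 'a) \<Rightarrow> 'a set \<Rightarrow> bool" where
  "is_attractor m f A \<longleftrightarrow> compact A \<and> A \<noteq> {} \<and> A = (\<Union>i\<in>{1..m}. f i ` A)"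

definition word_map :: "(nat \<Rightarrow> 'a \<Rightarrow> 'a) \<Rightarrow> nat list \<Rightarrow> 'a \<Rightarrow> 'a" where
  "word_map f w = foldr (\<lambda>i g. f i \<circ> g) w id"

definition Fstar :: "nat \<Rightarrow> (nat \<Rightarrow> 'a \<Rightarrow> 'a) \<Rightarrow> ('a \<Rightarrow> 'a) set" where
  "Fstar m f = {word_map f w | w. set w \<subseteq> {1..m}}"

definition neighbour_maps :: "nat \<Rightarrow> (nat \<Rightarrow> 'a \<Rightarrow> 'a) \<Rightarrow> 'a set \<Rightarrow> ('a \<Rightarrow> 'a) set" where
  "neighbour_maps m f A =
     {h. (\<exists>f'\<in>Fstar m f. \<exists>g\<in>Fstar m f. h = inv f' \<circ> g) \<and>
         \<not> (\<exists>p\<in>Fstar m f. p ` A \<subseteq> h ` A)}"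

text \<open>U_1 = {x. d(x,A) < inf_{h in N} d(x,h(A))}, infimum taken in the extended reals
  (so the infimum over the empty set is +infinity).\<close>
definition U1 :: "nat \<Rightarrow> (nat \<Rightarrow> 'a::euclidean_space \<Rightarrow> 'a) \<Rightarrow> 'a set \<Rightarrow> 'a set" where
  "U1 m f A = {x. ereal (infdist x A) <
                  (INF h\<in>neighbour_maps m f A. ereal (infdist x (h ` A)))}"

end

theory Submission
  imports Defs
begin

lemma sim_props:
  fixes g :: "'a::euclidean_space \<Rightarrow> 'a"
  assumes "contracting_similitude g"
  obtains r where "0 < r" "r < 1" "\<And>x y. dist (g x) (g y) = r * dist x y" "bij g"
proof -
  obtain r where r: "0 < r" "r < 1" "\<And>x y. dist (g x) (g y) = r * dist x y"
    using assms unfolding contracting_similitude_def by blast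
  define l where "l x = g x - g 0" for x
  have l0: "l 0 = 0" by (simp add: l_def)
  have ld: "\<forall>x y. dist (l x) (l y) = r * dist x y"
    using r(3) by (simp add: l_def dist_norm)
  have lin: "linear l" by (rule scaling_linear[OF l0 ld])
  have injl: "inj l"
  proof (rule injI)
    fix x y assume "l x = l y"
    then have "r * dist x y = 0" using ld by (metis dist_self)
    then show "x = y" using r(1) by simp
  qed
  have "surj l" using lin injl by (metis linear_injective_imp_surjective)
  have "surj g"
  proof -
    { fix y
      obtain x where "y - g 0 = l x" using \<open>surj l\<close> by (metis surjD)
      then have "\<exists>x. y = g x" by (auto simp: l_def) }
    then show ?thesis by blast
  qed
  moreover have "inj g"
  proof (rule injI)
    fix x y assume "g x = g y"
    then have "r * dist x y = 0" using r(3) by (metis dist_self)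
    then show "x = y" using r(1) by simp
  qed
  ultimately show ?thesis using that r by (simp add: bij_def)
qed

lemma word_map_Nil: "word_map f [] = id" by (simp add: word_map_def)
lemma word_map_Cons: "word_map f (k # w) = f k \<circ> word_map f w" by (simp add: word_map_def)
lemma word_map_snoc: "word_map f (w @ [k]) = word_map f w \<circ> f k"
  by (induction w) (auto simp: word_map_def)

lemma id_Fstar: "id \<in> Fstar m f"
  unfolding Fstar_def by (rule CollectI, rule exI[of _ "[]"]) (simp add: word_map_Nil)

lemma Fstar_mem: "set w \<subseteq> {1..m} \<Longrightarrow> word_map f w \<in> Fstar m f"
  unfolding Fstar_def by blast

lemma Fstar_left: "p \<in> Fstar m f \<Longrightarrow> k \<in> {1..m} \<Longrightarrow> f k \<circ> p \<in> Fstar m f"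
proof -
  assume "p \<in> Fstar m f" "k \<in> {1..m}"
  then obtain w where "p = word_map f w" "set w \<subseteq> {1..m}" unfolding Fstar_def by blast
  then show ?thesis using Fstar_mem[of "k # w" m f] \<open>k \<in> {1..m}\<close> by (simp add: word_map_Cons)
qed

lemma Fstar_right: "p \<in> Fstar m f \<Longrightarrow> k \<in> {1..m} \<Longrightarrow> p \<circ> f k \<in> Fstar m f"
proof -
  assume "p \<in> Fstar m f" "k \<in> {1..m}"
  then obtain w where "p = word_map f w" "set w \<subseteq> {1..m}" unfolding Fstar_def by blast
  then show ?thesis using Fstar_mem[of "w @ [k]" m f] \<open>k \<in> {1..m}\<close> by (simp add: word_map_snoc)
qed

lemma Fstar_bij:
  assumes "similitude_IFS m (f :: nat \<Rightarrow> 'a::euclidean_space \<Rightarrow> 'a)" "p \<in> Fstar m f"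
  shows "bij p"
proof -
  obtain w where w: "p = word_map f w" "set w \<subseteq> {1..m}" using assms(2) unfolding Fstar_def by blast
  have "bij (word_map f w)" using w(2)
  proof (induction w)
    case Nil then show ?case by (simp add: word_map_Nil id_def bij_def inj_on_def)
  next
    case (Cons k w)
    then have "contracting_similitude (f k)" using assms(1) unfolding similitude_IFS_def by auto
    then have "bij (f k)" by (rule sim_props) blast
    have "bij (word_map f w)" using Cons by simp
    then show ?case unfolding word_map_Cons using \<open>bij (f k)\<close> by (rule bij_comp)
  qed
  then show ?thesis using w by simp
qed

lemma att_sub:
  assumes "is_attractor m f A" "k \<in> {1..m}"
  shows "f k ` A \<subseteq> A"
proof -
  have eq: "A = (\<Union>i\<in>{1..m}. f i ` A)" using assms(1) unfolding is_attractor_def by (elim conjE)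
  have "f k ` A \<subseteq> (\<Union>i\<in>{1..m}. f i ` A)" using assms(2) by (rule UN_upper)
  then show ?thesis using eq by simp
qed

lemma Fstar_sub:
  assumes "is_attractor m f A" "p \<in> Fstar m f"
  shows "p ` A \<subseteq> A"
proof -
  obtain w where w: "p = word_map f w" "set w \<subseteq> {1..m}" using assms(2) unfolding Fstar_def by blast
  have "word_map f w ` A \<subseteq> A" using w(2)
  proof (induction w)
    case Nil then show ?case by (simp add: word_map_Nil)
  next
    case (Cons k w)
    then have "f k ` A \<subseteq> A" using att_sub[OF assms(1)] by simp
    then show ?case using Cons by (auto simp: word_map_Cons)
  qed
  then show ?thesis using w by simp
qed

lemma key:
  fixes f :: "nat \<Rightarrow> 'a::euclidean_space \<Rightarrow> 'a"
  assumes ifs: "similitude_IFS m f" and att: "is_attractor m f A"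
    and h: "h \<in> neighbour_maps m f A" and k: "k \<in> {1..m}" and q: "q \<in> Fstar m f"
  shows "inv (f k) \<circ> h \<circ> q \<in> neighbour_maps m f A"
proof -
  obtain f' g where f': "f' \<in> Fstar m f" and g: "g \<in> Fstar m f" and hd: "h = inv f' \<circ> g"
    and np: "\<not> (\<exists>p\<in>Fstar m f. p ` A \<subseteq> h ` A)"
    using h unfolding neighbour_maps_def by blast
  have "contracting_similitude (f k)" using ifs k unfolding similitude_IFS_def by auto
  then have bk: "bij (f k)" by (rule sim_props) blast
  have bf': "bij f'" by (rule Fstar_bij[OF ifs f'])
  have eq: "inv (f k) \<circ> h \<circ> q = inv (f' \<circ> f k) \<circ> (g \<circ> q)"
    using hd by (simp add: o_inv_distrib[OF bf' bk] o_assoc)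
  have c1: "\<exists>f'\<in>Fstar m f. \<exists>g\<in>Fstar m f. inv (f k) \<circ> h \<circ> q = inv f' \<circ> g"
  proof -
    have "g \<circ> q \<in> Fstar m f"
    proof -
      obtain w1 where "g = word_map f w1" "set w1 \<subseteq> {1..m}" using g unfolding Fstar_def by blast
      moreover obtain w2 where "q = word_map f w2" "set w2 \<subseteq> {1..m}" using q unfolding Fstar_def by blast
      moreover have "word_map f (w1 @ w2) = word_map f w1 \<circ> word_map f w2"
        by (induction w1) (auto simp: word_map_def)
      ultimately show ?thesis using Fstar_mem[of "w1 @ w2" m f] by simp
    qed
    then show ?thesis using eq Fstar_right[OF f' k] by blast
  qed
  have c2: "\<not> (\<exists>p\<in>Fstar m f. p ` A \<subseteq> (inv (f k) \<circ> h \<circ> q) ` A)"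
  proof
    assume "\<exists>p\<in>Fstar m f. p ` A \<subseteq> (inv (f k) \<circ> h \<circ> q) ` A"
    then obtain p where p: "p \<in> Fstar m f" "p ` A \<subseteq> (inv (f k) \<circ> h \<circ> q) ` A" by blast
    have "(f k \<circ> p) ` A \<subseteq> f k ` (inv (f k) \<circ> h \<circ> q) ` A" using p(2) by (auto simp: image_comp[symmetric])
    also have "\<dots> = h ` q ` A"
      using bk by (simp add: image_comp[symmetric] image_image bij_is_surj surj_f_inv_f)
    also have "\<dots> \<subseteq> h ` A" using Fstar_sub[OF att q] by auto
    finally show False using np Fstar_left[OF p(1) k] by blast
  qed
  show ?thesis unfolding neighbour_maps_def using c1 c2 by (intro CollectI conjI)
qed

lemma infdist_lb:
  assumes "S \<noteq> {}" "\<And>y. y \<in> S \<Longrightarrow> c \<le> dist x y"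
  shows "c \<le> infdist x S"
  using assms unfolding infdist_def by (auto intro: cINF_greatest)

theorem mainTheorem5:
  fixes f :: "nat \<Rightarrow> 'a::euclidean_space \<Rightarrow> 'a" and m :: nat and A :: "'a set"
  assumes "similitude_IFS m f" and "is_attractor m f A"
  shows "(\<forall>h\<in>neighbour_maps m f A. \<forall>j\<in>{1..m}. \<forall>k\<in>{1..m}.
            inv (f k) \<circ> h \<circ> f j \<in> neighbour_maps m f A)
       \<and> (\<forall>k\<in>{1..m}. (\<Union>h\<in>neighbour_maps m f A. h ` A)
                        \<subseteq> f k ` (\<Union>h\<in>neighbour_maps m f A. h ` A))
       \<and> (\<forall>k\<in>{1..m}. f k ` U1 m f A \<subseteq> U1 m f A)"
proof (intro conjI ballI)
  have fjF: "f j \<in> Fstar m f" if "j \<in> {1..m}" for j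
    using Fstar_left[OF id_Fstar that] by simp
  show a: "inv (f k) \<circ> h \<circ> f j \<in> neighbour_maps m f A"
    if "h \<in> neighbour_maps m f A" "j \<in> {1..m}" "k \<in> {1..m}" for h j k
    using key[OF assms that(1) that(3) fjF[OF that(2)]] .
  fix k assume k: "k \<in> {1..m}"
  have "contracting_similitude (f k)" using assms(1) k unfolding similitude_IFS_def by auto
  then obtain r where r: "0 < r" "r < 1" "\<And>x y. dist (f k x) (f k y) = r * dist x y" "bij (f k)"
    by (rule sim_props) blast
  show "(\<Union>h\<in>neighbour_maps m f A. h ` A) \<subseteq> f k ` (\<Union>h\<in>neighbour_maps m f A. h ` A)"
  proof
    fix x assume "x \<in> (\<Union>h\<in>neighbour_maps m f A. h ` A)"
    then obtain h a where h: "h \<in> neighbour_maps m f A" "a \<in> A" "x = h a" by blast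
    have "inv (f k) \<circ> h \<circ> id \<in> neighbour_maps m f A" using key[OF assms h(1) k id_Fstar] .
    moreover have "inv (f k) x = (inv (f k) \<circ> h \<circ> id) a" using h(3) by simp
    ultimately have "inv (f k) x \<in> (\<Union>h\<in>neighbour_maps m f A. h ` A)" using h(2) by blast
    moreover have "x = f k (inv (f k) x)" using r(4) by (simp add: bij_is_surj surj_f_inv_f)
    ultimately show "x \<in> f k ` (\<Union>h\<in>neighbour_maps m f A. h ` A)" by blast
  qed
  show "f k ` U1 m f A \<subseteq> U1 m f A"
  proof
    fix z assume "z \<in> f k ` U1 m f A"
    then obtain x where x: "x \<in> U1 m f A" "z = f k x" by blast
    let ?I = "INF h\<in>neighbour_maps m f A. ereal (infdist x (h ` A))"
    have lt: "ereal (infdist x A) < ?I" using x(1) unfolding U1_def by blast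
    then obtain t where t1: "ereal (infdist x A) < ereal t" and t2: "ereal t < ?I"
      using ereal_dense2 by blast
    have Ane: "A \<noteq> {}" using assms(2) unfolding is_attractor_def by (elim conjE)
    have cA: "compact A" using assms(2) unfolding is_attractor_def by (elim conjE)
    have fkA: "f k ` A \<subseteq> A" using att_sub[OF assms(2) k] .
    obtain a0 where a0: "a0 \<in> A" "infdist x A = dist x a0"
      using infdist_attains_inf[OF compact_imp_closed[OF cA] Ane] by metis
    have up: "infdist z A \<le> r * infdist x A"
    proof -
      have "infdist z A \<le> dist z (f k a0)" using fkA a0(1) by (intro infdist_le) auto
      also have "\<dots> = r * infdist x A" using x(2) r(3) a0(2) by simp
      finally show ?thesis .
    qed
    have "ereal (infdist z A) < ereal (r * t)"
    proof -
      have "r * infdist x A < r * t" using t1 r(1) by simp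
      then show ?thesis using up by simp
    qed
    also have "ereal (r * t) \<le> (INF h\<in>neighbour_maps m f A. ereal (infdist z (h ` A)))"
    proof (rule INF_greatest)
      fix h assume h: "h \<in> neighbour_maps m f A"
      let ?h' = "inv (f k) \<circ> h \<circ> id"
      have h': "?h' \<in> neighbour_maps m f A" using key[OF assms h k id_Fstar] .
      have "ereal t < ereal (infdist x (?h' ` A))"
        using less_le_trans[OF t2 INF_lower[OF h', of "\<lambda>h. ereal (infdist x (h ` A))"]] by simp
      then have tl: "t < infdist x (?h' ` A)" by simp
      have "r * t \<le> infdist z (h ` A)"
      proof (rule infdist_lb)
        show "h ` A \<noteq> {}" using Ane by simp
        fix y assume "y \<in> h ` A"
        then obtain a where a: "a \<in> A" "y = h a" by blast
        have "y = f k (?h' a)" using a r(4) by (simp add: bij_is_surj surj_f_inv_f)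
        moreover have "infdist x (?h' ` A) \<le> dist x (?h' a)" using a by (intro infdist_le) simp
        ultimately have "dist z y = r * dist x (?h' a)" and "t \<le> dist x (?h' a)"
          using x(2) r(3) tl by simp_all
        then show "r * t \<le> dist z y" using r(1) mult_left_mono[of t "dist x (?h' a)" r] by simp
      qed
      then show "ereal (r * t) \<le> ereal (infdist z (h ` A))" by simp
    qed
    finally have "ereal (infdist z A) < (INF h\<in>neighbour_maps m f A. ereal (infdist z (h ` A)))" .
    then show "z \<in> U1 m f A" unfolding U1_def by (rule CollectI)
  qed
qed

end
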